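(* Fix a positive integer $u$ and define $f:\mathbb Z_{\ge0}\times\mathbb R_{\ge0}\to\mathbb R$ by $f(p,q)=qu$ if $q\le\lfloor p/u\rfloor$; $f(p,q)=u\lfloor p/u\rfloor+u\left(\tfrac pu-\lfloor \tfrac pu\rfloor\right)\left(q-\lfloor p/u\rfloor\right)$ if $\lfloor p/u\rfloor<q<\lceil p/u\rceil$; and $f(p,q)=p$ if $q\ge\lceil p/u\rceil$. Then for each fixed $p\in\mathbb Z_{\ge0}$, the function $q\mapsto f(p,q)$ is concave on $\mathbb R_{\ge0}$, and for each fixed $q\in\mathbb R_{\ge0}$, the function $p\mapsto f(p,q)$ is concave on $\mathbb Z_{\ge0}$ (i.e. $2f(p,q)\ge f(p-1,q)+f(p+1,q)$ for all integers $p\ge1$). *)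

theory Defs
  imports "HOL-Analysis.Analysis"
begin

definition fpq :: "nat \<Rightarrow> nat \<Rightarrow> real \<Rightarrow> real" where
  "fpq u p q =
     (let a = real p / real u in
      if q \<le> of_int \<lfloor>a\<rfloor> then q * real u
      else if q < of_int \<lceil>a\<rceil> then
        real u * of_int \<lfloor>a\<rfloor> + real u * (a - of_int \<lfloor>a\<rfloor>) * (q - of_int \<lfloor>a\<rfloor>)
      else real p)"

end

theory Submission
  imports Defs
begin

lemma L1:
  fixes u p :: nat and q :: real
  assumes u: "u > 0"
  defines "k \<equiv> real_of_int \<lfloor>real p / real u\<rfloor>"
  shows "fpq u p q = min (q * real u) (min (real u * k + (real p - real u * k) * (q - k)) (real p))"
proof -
  define a where "a = real p / real u"
  have ua: "real u * a = real p" using u by (simp add: a_def)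
  have ka: "k \<le> a" "a < k + 1" unfolding k_def a_def by linarith+
  have k1: "real u * k \<le> real p" using ka(1) ua u
    by (metis mult_le_cancel_left_pos of_nat_0_less_iff)
  have k2: "real p - real u * k \<le> real u"
  proof -
    have "real u * a \<le> real u * (k+1)" using ka(2) u by simp
    thus ?thesis using ua by (simp add: algebra_simps)
  qed
  have ci: "\<lceil>a\<rceil> \<le> \<lfloor>a\<rfloor> + 1"
    by (simp add: ceiling_le_iff)
  have fi: "\<lfloor>a\<rfloor> \<le> \<lceil>a\<rceil>" by (rule floor_le_ceiling)
  have kk: "k = of_int \<lfloor>a\<rfloor>" unfolding k_def a_def by simp
  have c1: "of_int \<lceil>a\<rceil> \<le> k + 1" using ci kk by (metis of_int_add of_int_le_iff of_int_1)
  have c2: "a \<le> of_int \<lceil>a\<rceil>" by linarith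
  have c3: "of_int \<lceil>a\<rceil> = k \<Longrightarrow> real p = real u * k" using ka c2 ua by simp
  have c4: "k \<le> of_int \<lceil>a\<rceil>" using fi kk by simp
  have c5: "of_int \<lceil>a\<rceil> \<noteq> k \<Longrightarrow> of_int \<lceil>a\<rceil> = k + 1"
  proof -
    assume "of_int \<lceil>a\<rceil> \<noteq> k"
    hence "\<lceil>a\<rceil> \<noteq> \<lfloor>a\<rfloor>" using kk by auto
    hence "\<lceil>a\<rceil> = \<lfloor>a\<rfloor> + 1" using ci fi by linarith
    thus ?thesis using kk by simp
  qed
  show ?thesis
  proof (cases "q \<le> k")
    case True
    have "(real u - (real p - real u * k)) * (q - k) \<le> 0"
      using k2 True by (intro mult_nonneg_nonpos) auto
    hence m: "q * real u \<le> real u * k + (real p - real u * k) * (q - k)"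
      by (simp add: algebra_simps)
    have "q * real u \<le> k * real u" using True by (simp add: mult_right_mono)
    hence "q * real u \<le> real p" using k1 by (simp add: mult.commute)
    thus ?thesis using True m unfolding fpq_def Let_def a_def[symmetric] kk[symmetric] by simp
  next
    case False
    show ?thesis
    proof (cases "q < of_int \<lceil>a\<rceil>")
      case True
      have ce: "of_int \<lceil>a\<rceil> = k + 1" using c3 c5 True False by linarith
      have e: "real u * k + real u * (a - k) * (q - k) = real u * k + (real p - real u * k) * (q - k)"
        using ua by (simp add: algebra_simps)
      have "(real p - real u * k) * (q - k) \<le> real u * (q - k)"
        using k2 False by (intro mult_right_mono) auto
      hence m1: "real u * k + (real p - real u * k) * (q - k) \<le> q * real u" by (simp add: algebra_simps)
      have "(real p - real u * k) * (q - k) \<le> (real p - real u * k) * 1"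
        using k1 True ce by (intro mult_left_mono) auto
      hence m2: "real u * k + (real p - real u * k) * (q - k) \<le> real p" by simp
      show ?thesis using True False m1 m2 e
        unfolding fpq_def Let_def a_def[symmetric] kk[symmetric] by simp
    next
      case T2: False
      have m1: "real p \<le> q * real u" using T2 c2 ua u
        by (metis mult.commute mult_le_cancel_left_pos not_less of_nat_0_less_iff order_trans)
      have m2: "real p \<le> real u * k + (real p - real u * k) * (q - k)"
      proof (cases "of_int \<lceil>a\<rceil> = k")
        case True thus ?thesis using c3 False by simp
      next
        case F: False
        have "(real p - real u * k) * 1 \<le> (real p - real u * k) * (q - k)"
          using k1 T2 c5[OF F] by (intro mult_left_mono) auto
        thus ?thesis by simp
      qed
      show ?thesis using T2 False m1 m2
        unfolding fpq_def Let_def a_def[symmetric] kk[symmetric] by simp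
    qed
  qed
qed

lemma floor_facts:
  fixes u p :: nat
  assumes u: "u > 0"
  defines "k \<equiv> real_of_int \<lfloor>real p / real u\<rfloor>"
  shows "real u * k \<le> real p" "real p < real u * k + real u"
proof -
  define a where "a = real p / real u"
  have ua: "real u * a = real p" using u by (simp add: a_def)
  have ka: "k \<le> a" "a < k + 1" unfolding k_def a_def by linarith+
  show "real u * k \<le> real p" using ka(1) ua u
    by (metis mult_le_cancel_left_pos of_nat_0_less_iff)
  have "real u * a < real u * (k+1)" using ka(2) u by simp
  thus "real p < real u * k + real u" using ua by (simp add: algebra_simps)
qed

lemma L2:
  fixes u p :: nat and q :: real
  assumes u: "u > 0" and q: "q \<ge> 0"
  defines "n \<equiv> real_of_int \<lfloor>q\<rfloor>"
  shows "fpq u p q = min (real p) (min (real u * n + (q - n) * (real p - real u * n)) (real u * q))"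
proof -
  define k where "k = real_of_int \<lfloor>real p / real u\<rfloor>"
  have L: "fpq u p q = min (q * real u) (min (real u * k + (real p - real u * k) * (q - k)) (real p))"
    unfolding k_def by (rule L1[OF u])
  have f1: "real u * k \<le> real p" "real p < real u * k + real u"
    unfolding k_def using floor_facts[OF u] by auto
  have nq: "n \<le> q" "q < n + 1" unfolding n_def by linarith+
  consider (lt) "\<lfloor>real p / real u\<rfloor> < \<lfloor>q\<rfloor>" | (eq) "\<lfloor>real p / real u\<rfloor> = \<lfloor>q\<rfloor>"
    | (gt) "\<lfloor>real p / real u\<rfloor> > \<lfloor>q\<rfloor>" by linarith
  thus ?thesis
  proof cases
    case lt
    hence kn: "k + 1 \<le> n" unfolding k_def n_def by (metis of_int_1 of_int_add of_int_le_iff zless_imp_add1_zle)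
    have "(real p - real u * k) * 1 \<le> (real p - real u * k) * (q - k)"
      using f1 kn nq by (intro mult_left_mono) auto
    hence m1: "real p \<le> real u * k + (real p - real u * k) * (q - k)" by simp
    have "real u * (k+1) \<le> real u * q" using kn nq by (intro mult_left_mono) auto
    hence m2: "real p \<le> q * real u" using f1 by (simp add: algebra_simps)
    have "real u * (k+1) \<le> real u * n" using kn by (intro mult_left_mono) auto
    hence pn: "real p - real u * n \<le> 0" using f1 by (simp add: algebra_simps)
    have "(q - n) * (real p - real u * n) \<ge> 1 * (real p - real u * n)"
      using pn nq by (intro mult_right_mono_neg) auto
    hence m3: "real p \<le> real u * n + (q - n) * (real p - real u * n)" by simp
    show ?thesis using L m1 m2 m3 by (simp add: mult.commute)
  next
    case eq
    hence "k = n" unfolding k_def n_def by simp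
    thus ?thesis using L by (simp add: algebra_simps min.commute min.left_commute)
  next
    case gt
    hence kn: "n + 1 \<le> k" unfolding k_def n_def by (metis of_int_1 of_int_add of_int_le_iff zless_imp_add1_zle)
    have "(real u - (real p - real u * k)) * (q - k) \<le> 0"
      using f1 kn nq by (intro mult_nonneg_nonpos) auto
    hence m1: "q * real u \<le> real u * k + (real p - real u * k) * (q - k)"
      by (simp add: algebra_simps)
    have "real u * q \<le> real u * k" using kn nq by (intro mult_left_mono) auto
    hence m2: "q * real u \<le> real p" using f1(1) by (metis mult.commute order_trans)
    have "real u * (n+1) \<le> real u * k" using kn by (intro mult_left_mono) auto
    hence pn: "real u \<le> real p - real u * n" using f1 by (simp add: algebra_simps)
    have "(q - n) * real u \<le> (q - n) * (real p - real u * n)"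
      using pn nq by (intro mult_left_mono) auto
    hence m3: "real u * q \<le> real u * n + (q - n) * (real p - real u * n)"
      by (simp add: algebra_simps)
    show ?thesis using L m1 m2 m3 by (simp add: mult.commute min_def)
  qed
qed

lemma min3_conc:
  fixes a1 b1 a2 b2 a3 b3 x y t w :: real
  assumes "t \<ge> 0" "w \<ge> 0" "t + w = 1"
  shows "t * min (a1*x+b1) (min (a2*x+b2) (a3*x+b3)) + w * min (a1*y+b1) (min (a2*y+b2) (a3*y+b3))
     \<le> min (a1*(t*x+w*y)+b1) (min (a2*(t*x+w*y)+b2) (a3*(t*x+w*y)+b3))"
proof -
  have g: "t * min (a*x+b) c + w * min (a*y+b) d \<le> a*(t*x+w*y)+b" for a b c d :: real
  proof -
    have "t * min (a*x+b) c \<le> t * (a*x+b)" using assms by (intro mult_left_mono) auto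
    moreover have "w * min (a*y+b) d \<le> w * (a*y+b)" using assms by (intro mult_left_mono) auto
    moreover have "t * (a*x+b) + w * (a*y+b) = a*(t*x+w*y)+(t+w)*b" by (simp add: algebra_simps)
    ultimately show ?thesis using assms by simp
  qed
  have h2: "min (a2*x+b2) (min (a3*x+b3) (a1*x+b1)) = min (a1*x+b1) (min (a2*x+b2) (a3*x+b3))"
    for x by (simp add: min.commute min.left_commute)
  have h3: "min (a3*x+b3) (min (a1*x+b1) (a2*x+b2)) = min (a1*x+b1) (min (a2*x+b2) (a3*x+b3))"
    for x by (simp add: min.commute min.left_commute)
  show ?thesis
    using g[of a1 b1 "min (a2*x+b2) (a3*x+b3)" "min (a2*y+b2) (a3*y+b3)"]
      g[of a2 b2 "min (a3*x+b3) (a1*x+b1)" "min (a3*y+b3) (a1*y+b1)"]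
      g[of a3 b3 "min (a1*x+b1) (a2*x+b2)" "min (a1*y+b1) (a2*y+b2)"]
    unfolding h2 h3 by simp
qed

theorem claim1:
  fixes u :: nat
  assumes "u > 0"
  shows "(\<forall>p::nat. concave_on {0..} (\<lambda>q. fpq u p q))
       \<and> (\<forall>q::real. q \<ge> 0 \<longrightarrow>
            (\<forall>p::nat. p \<ge> 1 \<longrightarrow> 2 * fpq u p q \<ge> fpq u (p - 1) q + fpq u (p + 1) q))"
proof (intro conjI allI impI)
  fix p :: nat
  define k where "k = real_of_int \<lfloor>real p / real u\<rfloor>"
  have e: "fpq u p q = min (real u * q + 0) (min ((real p - real u * k) * q + (real u * k - (real p - real u * k) * k)) (0 * q + real p))" for q
    unfolding L1[OF assms] k_def[symmetric] by (simp add: algebra_simps min.commute)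
  show "concave_on {0..} (\<lambda>q. fpq u p q)"
    unfolding concave_on_iff
  proof (intro conjI ballI allI impI)
    fix x y t w :: real assume "t \<ge> 0" "w \<ge> 0" "t + w = 1"
    thus "t * fpq u p x + w * fpq u p y \<le> fpq u p (t *\<^sub>R x + w *\<^sub>R y)"
      unfolding e real_scaleR_def by (rule min3_conc)
  qed simp
next
  fix q :: real and p :: nat
  assume q: "q \<ge> 0" and p: "p \<ge> 1"
  define n where "n = real_of_int \<lfloor>q\<rfloor>"
  define G where "G x = min (1 * x + 0) (min ((q - n) * x + (real u * n - (q - n) * (real u * n))) (0 * x + real u * q))" for x
  have e: "fpq u m q = G (real m)" for m
    unfolding L2[OF assms q] n_def[symmetric] G_def by (simp add: algebra_simps)
  have h: "(1/2) * G (real (p-1)) + (1/2) * G (real (p+1)) \<le> G ((1/2) * real (p-1) + (1/2) * real (p+1))"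
    unfolding G_def by (rule min3_conc) auto
  have mid: "(1/2) * real (p-1) + (1/2) * real (p+1) = real p" using p by (simp add: of_nat_diff field_simps)
  have "(1/2) * fpq u (p - 1) q + (1/2) * fpq u (p + 1) q \<le> fpq u p q"
    using h unfolding e mid .
  thus "2 * fpq u p q \<ge> fpq u (p - 1) q + fpq u (p + 1) q" by simp
qed

end
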